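(* Let $F\in\{\mathbb{R},\mathbb{C}\}$. (1) Let $\Theta$ satisfy $\cos\Theta>0$ (for $F=\mathbb{R}$, $\Theta=0$). For $a,b\in F$ define $$a+_{\infty,\Theta}b=\lim_{|\alpha|\to\infty,\ \arg\alpha=\Theta}\epsilon_\alpha^{-1}\big(\epsilon_\alpha(a)+\epsilon_\alpha(b)\big).$$ Then $(F,+_{\infty,\Theta},\cdot)$ is a non-associative field. Moreover, for $a_1,\dots,a_n\in F$, writing $a_t=|a_t|e^{i\theta_t}$, $[n]_k=\{t\in[n]:|a_t|=|a_k|\}$ and $\sum_{t\in[n]_k}e^{i\theta_t}=r_ks_k$ with $r_k\ge0$, $|s_k|=1$, the limit $${}^{\infty,\Theta}\!\sum_{k\in[n]}a_k:=\lim_{|\alpha|\to\infty,\ \arg\alpha=\Theta}\epsilon_\alpha^{-1}\Big(\sum_{k\in[n]}\epsilon_\alpha(a_k)\Big)$$ equals $|a_M|\,r_M^{-i\tan\Theta}s_M$ if there is $M\in[n]$ with $|a_M|=\max\{|a_k|: k\in[n],\ a_k\neq0,\ r_k\neq0\}$, and equals $0$ otherwise. (2) Let $\Theta$ satisfy $\cos\Theta<0$ (for $F=\mathbb{R}$, $\Theta=\pi$). Define $a+_{-\infty,\Theta}b$ by the same limit with $|\alpha|\to\infty$, $\arg\alpha=\Theta$ (so $\mathrm{Re}\,\alpha\to-\infty$). Then $(F,+_{-\infty,\Theta},\cdot)$ is a non-associative field, and, with the same notation, the corresponding limit ${}^{-\infty,\Theta}\!\sum_{k\in[n]}a_k$ equals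 $|a_m|\,r_m^{-i\tan\Theta}s_m$ if there is $m\in[n]$ with $|a_m|=\min\{|a_k|:k\in[n],\ a_k\neq0,\ r_k\neq0\}$, and equals $0$ otherwise.
   Context: For $\alpha\in\mathbb{C}\setminus i\mathbb{R}$, $\epsilon_\alpha:\mathbb{C}\to\mathbb{C}$ is defined by $\epsilon_\alpha(0)=0$ and $\epsilon_\alpha(rs)=r^\alpha s=e^{\alpha\ln r}s$ for $r>0$, $|s|=1$; it is a multiplicative automorphism with inverse $\epsilon_\alpha^{-1}(\rho t)=\rho^{(1-i\,\mathrm{Im}\alpha)/\mathrm{Re}\alpha}t$. For real $\alpha\neq0$, $\epsilon_\alpha:\mathbb{R}\to\mathbb{R}$ is $x\mapsto\mathrm{sgn}(x)|x|^\alpha$. A non-associative field is a structure $(F,+,\cdot)$ satisfying all field axioms except that addition is not required to be associative. *)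

theory Defs
  imports "HOL-Analysis.Analysis"
begin

definition eps :: "complex \<Rightarrow> complex \<Rightarrow> complex" where
  "eps \<alpha> z = (if z = 0 then 0 else (complex_of_real (cmod z)) powr \<alpha> * sgn z)"

definition eps_inv :: "complex \<Rightarrow> complex \<Rightarrow> complex" where
  "eps_inv \<alpha> w = (if w = 0 then 0 else
     (complex_of_real (cmod w)) powr ((1 - \<i> * of_real (Im \<alpha>)) / of_real (Re \<alpha>)) * sgn w)"

text \<open>alpha = rho e^{i Theta}; the limit |alpha| -> infinity with arg alpha = Theta is rho -> +infinity.\<close>
definition dir_alpha :: "real \<Rightarrow> real \<Rightarrow> complex" where
  "dir_alpha \<Theta> \<rho> = complex_of_real \<rho> * cis \<Theta>"

definition eps_sum_fun :: "real \<Rightarrow> (nat \<Rightarrow> complex) \<Rightarrow> nat set \<Rightarrow> real \<Rightarrow> complex" where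
  "eps_sum_fun \<Theta> a I \<rho> =
     eps_inv (dir_alpha \<Theta> \<rho>) (\<Sum>k\<in>I. eps (dir_alpha \<Theta> \<rho>) (a k))"

definition lim_plus :: "real \<Rightarrow> complex \<Rightarrow> complex \<Rightarrow> complex" where
  "lim_plus \<Theta> a b = Lim at_top (\<lambda>\<rho>. eps_inv (dir_alpha \<Theta> \<rho>)
       (eps (dir_alpha \<Theta> \<rho>) a + eps (dir_alpha \<Theta> \<rho>) b))"

definition level_sum :: "(nat \<Rightarrow> complex) \<Rightarrow> nat \<Rightarrow> nat \<Rightarrow> complex" where
  "level_sum a n k = (\<Sum>t\<in>{t\<in>{1..n}. cmod (a t) = cmod (a k)}. sgn (a t))"

definition r_of :: "(nat \<Rightarrow> complex) \<Rightarrow> nat \<Rightarrow> nat \<Rightarrow> real" where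
  "r_of a n k = cmod (level_sum a n k)"

definition s_of :: "(nat \<Rightarrow> complex) \<Rightarrow> nat \<Rightarrow> nat \<Rightarrow> complex" where
  "s_of a n k = sgn (level_sum a n k)"

definition good_idx :: "(nat \<Rightarrow> complex) \<Rightarrow> nat \<Rightarrow> nat set" where
  "good_idx a n = {k\<in>{1..n}. a k \<noteq> 0 \<and> r_of a n k \<noteq> 0}"

definition limit_value :: "real \<Rightarrow> (nat \<Rightarrow> complex) \<Rightarrow> nat \<Rightarrow> nat \<Rightarrow> complex" where
  "limit_value \<Theta> a n M =
     complex_of_real (cmod (a M)) * (complex_of_real (r_of a n M)) powr (- \<i> * of_real (tan \<Theta>))
     * s_of a n M"

text \<open>Non-associative field on carrier S: all field axioms except associativity of addition.\<close>
definition nonassoc_field :: "'a set \<Rightarrow> ('a \<Rightarrow> 'a \<Rightarrow> 'a) \<Rightarrow> ('a \<Rightarrow> 'a \<Rightarrow> 'a) \<Rightarrow> bool" where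
  "nonassoc_field S add mul \<longleftrightarrow>
     (\<forall>x\<in>S. \<forall>y\<in>S. add x y \<in> S) \<and>
     (\<forall>x\<in>S. \<forall>y\<in>S. mul x y \<in> S) \<and>
     (\<forall>x\<in>S. \<forall>y\<in>S. add x y = add y x) \<and>
     (\<forall>x\<in>S. \<forall>y\<in>S. mul x y = mul y x) \<and>
     (\<forall>x\<in>S. \<forall>y\<in>S. \<forall>z\<in>S. mul (mul x y) z = mul x (mul y z)) \<and>
     (\<forall>x\<in>S. \<forall>y\<in>S. \<forall>z\<in>S. mul x (add y z) = add (mul x y) (mul x z)) \<and>
     (\<exists>z\<in>S. \<exists>u\<in>S. z \<noteq> u \<and>
        (\<forall>x\<in>S. add x z = x) \<and> (\<forall>x\<in>S. mul x u = x) \<and>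
        (\<forall>x\<in>S. \<exists>y\<in>S. add x y = z) \<and>
        (\<forall>x\<in>S. x \<noteq> z \<longrightarrow> (\<exists>y\<in>S. mul x y = u)))"

end

theory Submission
  imports Defs "HOL-Real_Asymp.Real_Asymp"
begin


lemma cpow_exp: "r > 0 \<Longrightarrow> complex_of_real r powr z = exp (z * of_real (ln r))"
  by (simp add: powr_def Ln_of_real)

lemma sgn_exp: "sgn (exp z) = exp (\<i> * of_real (Im z))"
proof -
  have "exp z = of_real (exp (Re z)) * exp (\<i> * of_real (Im z))"
    by (metis complex_eq exp_add exp_of_real mult.commute)
  moreover have "sgn (exp (\<i> * of_real (Im z))) = exp (\<i> * of_real (Im z))"
    by (simp add: sgn_eq norm_exp_i_times)
  ultimately show ?thesis by (simp add: sgn_mult sgn_of_real)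
qed

lemma cpow_norm: "z \<noteq> 0 \<Longrightarrow> complex_of_real (cmod z) powr w = exp (w * of_real (ln (cmod z)))"
  by (simp add: cpow_exp)

lemma eps_mult: "eps \<alpha> (x * y) = eps \<alpha> x * eps \<alpha> y"
proof (cases "x = 0 \<or> y = 0")
  case False
  then have "x * y \<noteq> 0" by simp
  then show ?thesis unfolding eps_def using False
    by (simp add: norm_mult sgn_mult powr_times_real)
qed (auto simp: eps_def)

lemma eps_inv_mult: "eps_inv \<alpha> (x * y) = eps_inv \<alpha> x * eps_inv \<alpha> y"
proof (cases "x = 0 \<or> y = 0")
  case False
  then have "x * y \<noteq> 0" by simp
  then show ?thesis unfolding eps_inv_def using False
    by (simp add: norm_mult sgn_mult powr_times_real)
qed (auto simp: eps_inv_def)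

lemma eps_inv_eps: assumes "Re \<alpha> \<noteq> 0" shows "eps_inv \<alpha> (eps \<alpha> x) = x"
proof (cases "x = 0")
  case True then show ?thesis by (simp add: eps_def eps_inv_def)
next
  case False
  define r where "r = cmod x"
  have r: "r > 0" using False r_def by simp
  have e: "eps \<alpha> x = exp (\<alpha> * of_real (ln r)) * sgn x"
    using False r by (simp add: eps_def cpow_exp r_def)
  have ne: "eps \<alpha> x \<noteq> 0" using e False by (simp add: sgn_eq)
  have n: "cmod (eps \<alpha> x) = exp (Re \<alpha> * ln r)"
    using e False by (simp add: norm_mult norm_exp_eq_Re norm_sgn)
  have s: "sgn (eps \<alpha> x) = exp (\<i> * of_real (Im \<alpha> * ln r)) * sgn x"
    using e by (simp add: sgn_mult sgn_exp)
  have "eps_inv \<alpha> (eps \<alpha> x) = exp ((1 - \<i> * of_real (Im \<alpha>)) / of_real (Re \<alpha>) * of_real (Re \<alpha> * ln r))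
        * exp (\<i> * of_real (Im \<alpha> * ln r)) * sgn x"
    using ne by (simp add: eps_inv_def n s cpow_exp)
  also have "(1 - \<i> * of_real (Im \<alpha>)) / of_real (Re \<alpha>) * of_real (Re \<alpha> * ln r) = (1 - \<i> * of_real (Im \<alpha>)) * of_real (ln r)"
    using assms by (simp add: field_simps)
  also have "exp \<dots> * exp (\<i> * of_real (Im \<alpha> * ln r)) = of_real r"
    using r by (simp add: exp_add[symmetric] algebra_simps exp_of_real)
  finally show ?thesis using r False by (simp add: r_def sgn_eq)
qed



lemma dir_Re [simp]: "Re (dir_alpha \<Theta> \<rho>) = \<rho> * cos \<Theta>"
  by (simp add: dir_alpha_def)
lemma dir_Im [simp]: "Im (dir_alpha \<Theta> \<rho>) = \<rho> * sin \<Theta>"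
  by (simp add: dir_alpha_def)

lemma eps_div_level:
  assumes "cmod x = L" "L0 > 0"
  shows "eps \<alpha> (x / of_real L0) = complex_of_real (L / L0) powr \<alpha> * sgn x"
proof (cases "x = 0")
  case True then show ?thesis using assms by (simp add: eps_def)
next
  case False
  then show ?thesis using assms
    by (simp add: eps_def norm_divide sgn_divide sgn_of_real)
qed

lemma exp_neg_lim:
  fixes q :: real assumes "q < 0"
  shows "((\<lambda>\<rho>. exp (\<rho> * q)) \<longlongrightarrow> 0) at_top"
  using assms by real_asymp

lemma beta_lim:
  assumes "cos \<Theta> \<noteq> 0"
  shows "((\<lambda>\<rho>. (1 - \<i> * of_real (Im (dir_alpha \<Theta> \<rho>))) / of_real (Re (dir_alpha \<Theta> \<rho>)))
           \<longlongrightarrow> - \<i> * of_real (tan \<Theta>)) at_top"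
proof -
  have "((\<lambda>\<rho>. complex_of_real (1 / cos \<Theta> * (1 / \<rho>)) - \<i> * of_real (tan \<Theta>)) \<longlongrightarrow> of_real (1 / cos \<Theta> * 0) - \<i> * of_real (tan \<Theta>)) at_top"
    by (intro tendsto_intros) real_asymp
  then have "((\<lambda>\<rho>. complex_of_real (1 / cos \<Theta> * (1 / \<rho>)) - \<i> * of_real (tan \<Theta>)) \<longlongrightarrow> - \<i> * of_real (tan \<Theta>)) at_top"
    by simp
  moreover have "eventually (\<lambda>\<rho>. complex_of_real (1 / cos \<Theta> * (1 / \<rho>)) - \<i> * of_real (tan \<Theta>)
      = (1 - \<i> * of_real (Im (dir_alpha \<Theta> \<rho>))) / of_real (Re (dir_alpha \<Theta> \<rho>))) at_top"
    using eventually_gt_at_top[of 0]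
  proof (rule eventually_mono)
    fix \<rho> :: real assume "\<rho> > 0"
    then show "complex_of_real (1 / cos \<Theta> * (1 / \<rho>)) - \<i> * of_real (tan \<Theta>)
      = (1 - \<i> * of_real (Im (dir_alpha \<Theta> \<rho>))) / of_real (Re (dir_alpha \<Theta> \<rho>))"
      using assms by (simp add: tan_def field_simps)
  qed
  ultimately show ?thesis by (rule Lim_transform_eventually)
qed



lemma core:
  fixes I :: "nat set" and a :: "nat \<Rightarrow> complex" and L0 :: real
  defines "\<sigma> \<equiv> \<lambda>L. (\<Sum>k\<in>{k\<in>I. cmod (a k) = L}. sgn (a k))"
  assumes fin: "finite I" and c: "cos \<Theta> \<noteq> 0" and L0: "L0 > 0"
    and s0: "\<sigma> L0 \<noteq> 0"
    and dom: "\<And>k. k \<in> I \<Longrightarrow> a k \<noteq> 0 \<Longrightarrow> \<sigma> (cmod (a k)) \<noteq> 0 \<Longrightarrow> cmod (a k) \<noteq> L0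
                 \<Longrightarrow> cos \<Theta> * ln (cmod (a k) / L0) < 0"
  shows "((\<lambda>\<rho>. eps_inv (dir_alpha \<Theta> \<rho>) (\<Sum>k\<in>I. eps (dir_alpha \<Theta> \<rho>) (a k)))
          \<longlongrightarrow> of_real L0 * of_real (cmod (\<sigma> L0)) powr (- \<i> * of_real (tan \<Theta>)) * sgn (\<sigma> L0)) at_top"
proof -
  let ?\<alpha> = "dir_alpha \<Theta>"
  define T where "T = (\<lambda>\<rho>. \<Sum>k\<in>I. eps (?\<alpha> \<rho>) (a k / of_real L0))"
  define g where "g = (\<lambda>L \<rho>. complex_of_real (L / L0) powr ?\<alpha> \<rho> * \<sigma> L)"
  have T_eq: "T \<rho> = (\<Sum>L\<in>(\<lambda>k. cmod (a k)) ` I. g L \<rho>)" for \<rho>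
  proof -
    have "T \<rho> = (\<Sum>L\<in>(\<lambda>k. cmod (a k)) ` I. \<Sum>k\<in>{k\<in>I. cmod (a k) = L}. eps (?\<alpha> \<rho>) (a k / of_real L0))"
      unfolding T_def by (rule sum.image_gen[OF fin])
    also have "\<dots> = (\<Sum>L\<in>(\<lambda>k. cmod (a k)) ` I. g L \<rho>)"
    proof (rule sum.cong[OF refl])
      fix L assume "L \<in> (\<lambda>k. cmod (a k)) ` I"
      have "(\<Sum>k\<in>{k\<in>I. cmod (a k) = L}. eps (?\<alpha> \<rho>) (a k / of_real L0))
          = (\<Sum>k\<in>{k\<in>I. cmod (a k) = L}. complex_of_real (L / L0) powr ?\<alpha> \<rho> * sgn (a k))"
        by (rule sum.cong[OF refl]) (use eps_div_level L0 in auto)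
      also have "\<dots> = g L \<rho>" unfolding g_def \<sigma>_def by (simp add: sum_distrib_left)
      finally show "(\<Sum>k\<in>{k\<in>I. cmod (a k) = L}. eps (?\<alpha> \<rho>) (a k / of_real L0)) = g L \<rho>" .
    qed
    finally show ?thesis .
  qed
  have g_lim: "(g L \<longlongrightarrow> (if L = L0 then \<sigma> L0 else 0)) at_top" if L: "L \<in> (\<lambda>k. cmod (a k)) ` I" for L
  proof (cases "L = L0")
    case True
    then show ?thesis using L0 by (simp add: g_def)
  next
    case False
    show ?thesis
    proof (cases "L = 0 \<or> \<sigma> L = 0")
      case True
      then show ?thesis using False by (auto simp: g_def)
    next
      case nz: False
      from L obtain k where k: "k \<in> I" "L = cmod (a k)" by auto
      then have ak: "a k \<noteq> 0" using nz by auto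
      have neg: "cos \<Theta> * ln (L / L0) < 0" using dom[OF k(1) ak] k nz False by auto
      have Lpos: "L / L0 > 0" using nz L0 k by auto
      have el: "((\<lambda>\<rho>. exp (\<rho> * (cos \<Theta> * ln (L / L0)))) \<longlongrightarrow> 0) at_top"
        using neg by (rule exp_neg_lim)
      have nrm: "norm (complex_of_real (L / L0) powr ?\<alpha> \<rho>) = exp (\<rho> * (cos \<Theta> * ln (L / L0)))" for \<rho>
        by (subst cpow_exp[OF Lpos]) (simp add: norm_exp_eq_Re algebra_simps)
      have "((\<lambda>\<rho>. complex_of_real (L / L0) powr ?\<alpha> \<rho>) \<longlongrightarrow> 0) at_top"
        by (rule tendsto_norm_zero_cancel) (simp only: nrm el)
      then have "((\<lambda>\<rho>. complex_of_real (L / L0) powr ?\<alpha> \<rho> * \<sigma> L) \<longlongrightarrow> 0) at_top"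
        by (rule tendsto_mult_left_zero)
      then show ?thesis using False by (simp add: g_def)
    qed
  qed
  have L0img: "L0 \<in> (\<lambda>k. cmod (a k)) ` I"
  proof (rule ccontr)
    assume "L0 \<notin> (\<lambda>k. cmod (a k)) ` I"
    then have e: "{k\<in>I. cmod (a k) = L0} = {}" by auto
    have "\<sigma> L0 = 0" unfolding \<sigma>_def by (simp only: e sum.empty)
    then show False using s0 by simp
  qed
  have T_lim: "(T \<longlongrightarrow> \<sigma> L0) at_top"
  proof -
    have "((\<lambda>\<rho>. \<Sum>L\<in>(\<lambda>k. cmod (a k)) ` I. g L \<rho>) \<longlongrightarrow> (\<Sum>L\<in>(\<lambda>k. cmod (a k)) ` I. (if L = L0 then \<sigma> L0 else 0))) at_top"
      by (rule tendsto_sum) (rule g_lim)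
    moreover have "(\<Sum>L\<in>(\<lambda>k. cmod (a k)) ` I. (if L = L0 then \<sigma> L0 else 0)) = \<sigma> L0"
      using L0img fin by (simp add: sum.delta)
    ultimately show ?thesis by (simp add: T_eq[abs_def])
  qed
  define \<beta> where "\<beta> = (\<lambda>\<rho>. (1 - \<i> * of_real (Im (?\<alpha> \<rho>))) / of_real (Re (?\<alpha> \<rho>)))"
  have beta: "(\<beta> \<longlongrightarrow> - \<i> * of_real (tan \<Theta>)) at_top" unfolding \<beta>_def by (rule beta_lim[OF c])
  have Tne: "eventually (\<lambda>\<rho>. T \<rho> \<noteq> 0) at_top"
    using T_lim s0 by (rule tendsto_imp_eventually_ne)
  have lim2: "((\<lambda>\<rho>. exp (\<beta> \<rho> * of_real (ln (cmod (T \<rho>)))) * sgn (T \<rho>))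
     \<longlongrightarrow> exp ((- \<i> * of_real (tan \<Theta>)) * of_real (ln (cmod (\<sigma> L0)))) * sgn (\<sigma> L0)) at_top"
    using s0 by (intro tendsto_intros beta T_lim) auto
  have ev: "eventually (\<lambda>\<rho>. of_real L0 * (exp (\<beta> \<rho> * of_real (ln (cmod (T \<rho>)))) * sgn (T \<rho>))
     = eps_inv (?\<alpha> \<rho>) (\<Sum>k\<in>I. eps (?\<alpha> \<rho>) (a k))) at_top"
    using eventually_conj[OF Tne eventually_gt_at_top[of 0]]
  proof (rule eventually_mono)
    fix \<rho> :: real assume h: "T \<rho> \<noteq> 0 \<and> \<rho> > 0"
    have Re: "Re (?\<alpha> \<rho>) \<noteq> 0" using h c by simp
    have "(\<Sum>k\<in>I. eps (?\<alpha> \<rho>) (a k)) = (\<Sum>k\<in>I. eps (?\<alpha> \<rho>) (of_real L0) * eps (?\<alpha> \<rho>) (a k / of_real L0))"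
      by (rule sum.cong[OF refl]) (use L0 in \<open>simp add: eps_mult[symmetric]\<close>)
    also have "\<dots> = eps (?\<alpha> \<rho>) (of_real L0) * T \<rho>" by (simp add: T_def sum_distrib_left)
    finally have "eps_inv (?\<alpha> \<rho>) (\<Sum>k\<in>I. eps (?\<alpha> \<rho>) (a k)) = of_real L0 * eps_inv (?\<alpha> \<rho>) (T \<rho>)"
      by (simp add: eps_inv_mult eps_inv_eps[OF Re])
    also have "eps_inv (?\<alpha> \<rho>) (T \<rho>) = exp (\<beta> \<rho> * of_real (ln (cmod (T \<rho>)))) * sgn (T \<rho>)"
      using h by (simp add: eps_inv_def \<beta>_def cpow_exp)
    finally show "of_real L0 * (exp (\<beta> \<rho> * of_real (ln (cmod (T \<rho>)))) * sgn (T \<rho>))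
     = eps_inv (?\<alpha> \<rho>) (\<Sum>k\<in>I. eps (?\<alpha> \<rho>) (a k))" by simp
  qed
  have "((\<lambda>\<rho>. of_real L0 * (exp (\<beta> \<rho> * of_real (ln (cmod (T \<rho>)))) * sgn (T \<rho>)))
     \<longlongrightarrow> of_real L0 * (exp ((- \<i> * of_real (tan \<Theta>)) * of_real (ln (cmod (\<sigma> L0)))) * sgn (\<sigma> L0))) at_top"
    by (intro tendsto_mult tendsto_const lim2)
  then have "((\<lambda>\<rho>. eps_inv (?\<alpha> \<rho>) (\<Sum>k\<in>I. eps (?\<alpha> \<rho>) (a k)))
     \<longlongrightarrow> of_real L0 * (exp ((- \<i> * of_real (tan \<Theta>)) * of_real (ln (cmod (\<sigma> L0)))) * sgn (\<sigma> L0))) at_top"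
    using ev by (rule Lim_transform_eventually)
  moreover have "exp ((- \<i> * of_real (tan \<Theta>)) * of_real (ln (cmod (\<sigma> L0)))) = of_real (cmod (\<sigma> L0)) powr (- \<i> * of_real (tan \<Theta>))"
    using s0 by (simp add: cpow_exp)
  ultimately show ?thesis by (simp add: mult.assoc)
qed



lemma level_sum_eq: "level_sum a n k = (\<Sum>t\<in>{t\<in>{1..n}. cmod (a t) = cmod (a k)}. sgn (a t))"
  by (simp add: level_sum_def)

lemma sum_lim_pos:
  assumes c: "cos \<Theta> > 0" and g: "good_idx a n \<noteq> {}" and M: "M \<in> {1..n}"
    and MM: "cmod (a M) = Max ((\<lambda>k. cmod (a k)) ` good_idx a n)"
  shows "(eps_sum_fun \<Theta> a {1..n} \<longlongrightarrow> limit_value \<Theta> a n M) at_top"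
proof -
  have fg: "finite (good_idx a n)" by (simp add: good_idx_def)
  have "Max ((\<lambda>k. cmod (a k)) ` good_idx a n) \<in> (\<lambda>k. cmod (a k)) ` good_idx a n"
    using fg g by (intro Max_in) auto
  then obtain k0 where k0: "k0 \<in> good_idx a n" "cmod (a M) = cmod (a k0)" using MM by auto
  have L0: "cmod (a M) > 0" using k0 by (auto simp: good_idx_def)
  have s0: "level_sum a n M \<noteq> 0"
    using k0 by (auto simp: good_idx_def r_of_def level_sum_def)
  have "((\<lambda>\<rho>. eps_inv (dir_alpha \<Theta> \<rho>) (\<Sum>k\<in>{1..n}. eps (dir_alpha \<Theta> \<rho>) (a k)))
          \<longlongrightarrow> of_real (cmod (a M)) * of_real (cmod (level_sum a n M)) powr (- \<i> * of_real (tan \<Theta>)) * sgn (level_sum a n M)) at_top"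
    unfolding level_sum_eq
  proof (rule core)
    show "cos \<Theta> \<noteq> 0" using c by simp
    show "(\<Sum>k\<in>{k \<in> {1..n}. cmod (a k) = cmod (a M)}. sgn (a k)) \<noteq> 0" using s0 by (simp add: level_sum_def)
    fix k assume k: "k \<in> {1..n}" "a k \<noteq> 0" "(\<Sum>t\<in>{t \<in> {1..n}. cmod (a t) = cmod (a k)}. sgn (a t)) \<noteq> 0"
      "cmod (a k) \<noteq> cmod (a M)"
    then have "k \<in> good_idx a n" by (auto simp: good_idx_def r_of_def level_sum_def)
    then have "cmod (a k) \<le> cmod (a M)" unfolding MM using fg by (intro Max_ge) auto
    then have "cmod (a k) / cmod (a M) < 1" using k(4) L0 by (simp add: field_simps)
    moreover have "cmod (a k) / cmod (a M) > 0" using k(2) L0 by simp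
    ultimately have "ln (cmod (a k) / cmod (a M)) < 0" by simp
    then show "cos \<Theta> * ln (cmod (a k) / cmod (a M)) < 0" using c by (simp add: mult_pos_neg)
  qed (use L0 in auto)
  then show ?thesis by (simp add: eps_sum_fun_def[abs_def] limit_value_def r_of_def s_of_def[abs_def])
qed

lemma sum_lim_neg:
  assumes c: "cos \<Theta> < 0" and g: "good_idx a n \<noteq> {}" and M: "M \<in> {1..n}"
    and MM: "cmod (a M) = Min ((\<lambda>k. cmod (a k)) ` good_idx a n)"
  shows "(eps_sum_fun \<Theta> a {1..n} \<longlongrightarrow> limit_value \<Theta> a n M) at_top"
proof -
  have fg: "finite (good_idx a n)" by (simp add: good_idx_def)
  have "Min ((\<lambda>k. cmod (a k)) ` good_idx a n) \<in> (\<lambda>k. cmod (a k)) ` good_idx a n"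
    using fg g by (intro Min_in) auto
  then obtain k0 where k0: "k0 \<in> good_idx a n" "cmod (a M) = cmod (a k0)" using MM by auto
  have L0: "cmod (a M) > 0" using k0 by (auto simp: good_idx_def)
  have s0: "level_sum a n M \<noteq> 0"
    using k0 by (auto simp: good_idx_def r_of_def level_sum_def)
  have "((\<lambda>\<rho>. eps_inv (dir_alpha \<Theta> \<rho>) (\<Sum>k\<in>{1..n}. eps (dir_alpha \<Theta> \<rho>) (a k)))
          \<longlongrightarrow> of_real (cmod (a M)) * of_real (cmod (level_sum a n M)) powr (- \<i> * of_real (tan \<Theta>)) * sgn (level_sum a n M)) at_top"
    unfolding level_sum_eq
  proof (rule core)
    show "cos \<Theta> \<noteq> 0" using c by simp
    show "(\<Sum>k\<in>{k \<in> {1..n}. cmod (a k) = cmod (a M)}. sgn (a k)) \<noteq> 0" using s0 by (simp add: level_sum_def)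
    fix k assume k: "k \<in> {1..n}" "a k \<noteq> 0" "(\<Sum>t\<in>{t \<in> {1..n}. cmod (a t) = cmod (a k)}. sgn (a t)) \<noteq> 0"
      "cmod (a k) \<noteq> cmod (a M)"
    then have "k \<in> good_idx a n" by (auto simp: good_idx_def r_of_def level_sum_def)
    then have "cmod (a k) \<ge> cmod (a M)" unfolding MM using fg by (intro Min_le) auto
    then have "cmod (a k) / cmod (a M) > 1" using k(4) L0 by (simp add: field_simps)
    then have "ln (cmod (a k) / cmod (a M)) > 0" by simp
    then show "cos \<Theta> * ln (cmod (a k) / cmod (a M)) < 0" using c by (simp add: mult_neg_pos)
  qed (use L0 in auto)
  then show ?thesis by (simp add: eps_sum_fun_def[abs_def] limit_value_def r_of_def s_of_def[abs_def])
qed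

lemma sum_lim_empty:
  assumes g: "good_idx a n = {}"
  shows "(eps_sum_fun \<Theta> a {1..n} \<longlongrightarrow> 0) at_top"
proof -
  have "(\<Sum>k\<in>{1..n}. eps \<alpha> (a k)) = 0" for \<alpha>
  proof -
    have "(\<Sum>k\<in>{1..n}. eps \<alpha> (a k)) = (\<Sum>L\<in>(\<lambda>k. cmod (a k)) ` {1..n}. \<Sum>k\<in>{k\<in>{1..n}. cmod (a k) = L}. eps \<alpha> (a k))"
      by (rule sum.image_gen) simp
    also have "\<dots> = (\<Sum>L\<in>(\<lambda>k. cmod (a k)) ` {1..n}. 0)"
    proof (rule sum.cong[OF refl])
      fix L assume "L \<in> (\<lambda>k. cmod (a k)) ` {1..n}"
      then obtain k where k: "k \<in> {1..n}" "L = cmod (a k)" by auto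
      have "(\<Sum>t\<in>{t\<in>{1..n}. cmod (a t) = L}. eps \<alpha> (a t)) = (\<Sum>t\<in>{t\<in>{1..n}. cmod (a t) = L}. complex_of_real L powr \<alpha> * sgn (a t))"
        by (rule sum.cong[OF refl]) (auto simp: eps_def)
      also have "\<dots> = complex_of_real L powr \<alpha> * level_sum a n k"
        by (simp add: sum_distrib_left level_sum_def k(2))
      also have "\<dots> = 0"
        using g k by (cases "a k = 0") (auto simp: good_idx_def r_of_def)
      finally show "(\<Sum>t\<in>{t\<in>{1..n}. cmod (a t) = L}. eps \<alpha> (a t)) = 0" .
    qed
    finally show ?thesis by simp
  qed
  then have "eps_sum_fun \<Theta> a {1..n} = (\<lambda>_. 0)"
    by (simp add: eps_sum_fun_def eps_inv_def fun_eq_iff)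
  then show ?thesis by simp
qed



definition pf :: "real \<Rightarrow> complex \<Rightarrow> complex \<Rightarrow> real \<Rightarrow> complex" where
  "pf \<Theta> x y \<rho> = eps_inv (dir_alpha \<Theta> \<rho>) (eps (dir_alpha \<Theta> \<rho>) x + eps (dir_alpha \<Theta> \<rho>) y)"

lemma pf_conv:
  assumes c: "cos \<Theta> \<noteq> 0"
  shows "\<exists>l. (pf \<Theta> x y \<longlongrightarrow> l) at_top"
proof -
  define a where "a = (\<lambda>k::nat. if k = 1 then x else y)"
  have e: "eps_sum_fun \<Theta> a {1..2} = pf \<Theta> x y"
  proof -
    have "{1..2::nat} = {1,2}" by auto
    then show ?thesis by (simp add: eps_sum_fun_def[abs_def] pf_def[abs_def] a_def)
  qed
  show ?thesis
  proof (cases "good_idx a 2 = {}")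
    case True
    then show ?thesis using sum_lim_empty[OF True, of \<Theta>] e by auto
  next
    case False
    have fg: "finite ((\<lambda>k. cmod (a k)) ` good_idx a 2)" by (simp add: good_idx_def)
    show ?thesis
    proof (cases "cos \<Theta> > 0")
      case True
      have "Max ((\<lambda>k. cmod (a k)) ` good_idx a 2) \<in> (\<lambda>k. cmod (a k)) ` good_idx a 2"
        using fg False by (intro Max_in) auto
      then obtain M where "M \<in> good_idx a 2" "cmod (a M) = Max ((\<lambda>k. cmod (a k)) ` good_idx a 2)"
        by auto
      then show ?thesis using sum_lim_pos[OF True False] e by (auto simp: good_idx_def)
    next
      case cn: False
      then have cn: "cos \<Theta> < 0" using c by simp
      have "Min ((\<lambda>k. cmod (a k)) ` good_idx a 2) \<in> (\<lambda>k. cmod (a k)) ` good_idx a 2"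
        using fg False by (intro Min_in) auto
      then obtain M where "M \<in> good_idx a 2" "cmod (a M) = Min ((\<lambda>k. cmod (a k)) ` good_idx a 2)"
        by auto
      then show ?thesis using sum_lim_neg[OF cn False] e by (auto simp: good_idx_def)
    qed
  qed
qed

lemma lim_plus_pf: "lim_plus \<Theta> x y = Lim at_top (pf \<Theta> x y)"
  by (simp add: lim_plus_def pf_def[abs_def])

lemma pf_lim:
  assumes c: "cos \<Theta> \<noteq> 0"
  shows "(pf \<Theta> x y \<longlongrightarrow> lim_plus \<Theta> x y) at_top"
proof -
  obtain l where l: "(pf \<Theta> x y \<longlongrightarrow> l) at_top" using pf_conv[OF c] by blast
  then have "lim_plus \<Theta> x y = l" unfolding lim_plus_pf by (intro tendsto_Lim) auto
  then show ?thesis using l by simp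
qed

lemma lim_plus_eqI:
  assumes "(pf \<Theta> x y \<longlongrightarrow> l) at_top"
  shows "lim_plus \<Theta> x y = l"
  unfolding lim_plus_pf using assms by (intro tendsto_Lim) auto

lemma eps_neg: "eps \<alpha> (- x) = - eps \<alpha> x"
  by (simp add: eps_def)

lemma lim_plus_comm: "lim_plus \<Theta> x y = lim_plus \<Theta> y x"
  by (simp add: lim_plus_def add.commute)

lemma lim_plus_zero:
  assumes c: "cos \<Theta> \<noteq> 0"
  shows "lim_plus \<Theta> x 0 = x"
proof (rule lim_plus_eqI)
  have "eventually (\<lambda>\<rho>. x = pf \<Theta> x 0 \<rho>) at_top"
    using eventually_gt_at_top[of 0]
    by (rule eventually_mono) (use c in \<open>simp add: pf_def eps_inv_eps eps_def[of _ 0]\<close>)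
  then show "(pf \<Theta> x 0 \<longlongrightarrow> x) at_top"
    by (rule Lim_transform_eventually[OF tendsto_const])
qed

lemma lim_plus_neg: "lim_plus \<Theta> x (- x) = 0"
proof (rule lim_plus_eqI)
  have "pf \<Theta> x (- x) = (\<lambda>_. 0)" by (simp add: pf_def[abs_def] eps_neg eps_inv_def)
  then show "(pf \<Theta> x (- x) \<longlongrightarrow> 0) at_top" by simp
qed

lemma lim_plus_distrib:
  assumes c: "cos \<Theta> \<noteq> 0"
  shows "x * lim_plus \<Theta> y z = lim_plus \<Theta> (x * y) (x * z)"
proof (rule sym, rule lim_plus_eqI)
  have "((\<lambda>\<rho>. x * pf \<Theta> y z \<rho>) \<longlongrightarrow> x * lim_plus \<Theta> y z) at_top"
    by (intro tendsto_mult tendsto_const pf_lim c)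
  moreover have "eventually (\<lambda>\<rho>. x * pf \<Theta> y z \<rho> = pf \<Theta> (x * y) (x * z) \<rho>) at_top"
    using eventually_gt_at_top[of 0]
  proof (rule eventually_mono)
    fix \<rho> :: real assume "\<rho> > 0"
    then have Re: "Re (dir_alpha \<Theta> \<rho>) \<noteq> 0" using c by simp
    show "x * pf \<Theta> y z \<rho> = pf \<Theta> (x * y) (x * z) \<rho>"
      by (simp add: pf_def eps_mult distrib_left[symmetric] eps_inv_mult eps_inv_eps[OF Re])
  qed
  ultimately show "(pf \<Theta> (x * y) (x * z) \<longlongrightarrow> x * lim_plus \<Theta> y z) at_top"
    by (rule Lim_transform_eventually)
qed

lemma sgn_real: "(x::complex) \<in> \<real> \<Longrightarrow> sgn x \<in> \<real>"
  by (metis Reals_cases Reals_of_real sgn_of_real)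

lemma pf_real:
  assumes "x \<in> \<real>" "y \<in> \<real>" "sin \<Theta> = 0"
  shows "pf \<Theta> x y \<rho> \<in> \<real>"
proof -
  have ar: "dir_alpha \<Theta> \<rho> \<in> \<real>" using assms(3) by (simp add: complex_is_Real_iff)
  have er: "eps (dir_alpha \<Theta> \<rho>) w \<in> \<real>" if "w \<in> \<real>" for w
    using that ar by (auto simp: eps_def intro!: Reals_mult sgn_real Reals_powr)
  have ir: "eps_inv (dir_alpha \<Theta> \<rho>) w \<in> \<real>" if "w \<in> \<real>" for w
    using that assms(3) by (auto simp: eps_inv_def intro!: Reals_mult sgn_real Reals_powr)
  show ?thesis unfolding pf_def using assms by (intro ir Reals_add er)
qed

lemma lim_plus_real:
  assumes "x \<in> \<real>" "y \<in> \<real>" "sin \<Theta> = 0" "cos \<Theta> \<noteq> 0"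
  shows "lim_plus \<Theta> x y \<in> \<real>"
  by (rule Lim_in_closed_set[OF closed_complex_Reals _ _ pf_lim[OF assms(4)]])
     (use pf_real[OF assms(1-3)] in auto)

lemma nonassoc:
  assumes c: "cos \<Theta> \<noteq> 0" and F: "F = UNIV \<or> (F = \<real> \<and> sin \<Theta> = 0)"
  shows "nonassoc_field F (lim_plus \<Theta>) (*)"
  unfolding nonassoc_field_def
proof (intro conjI ballI)
  fix x y assume "x \<in> F" "y \<in> F"
  then show "lim_plus \<Theta> x y \<in> F" using F lim_plus_real c by auto
next
  fix x y assume "x \<in> F" "y \<in> F"
  then show "x * y \<in> F" using F by auto
next
  fix x y show "lim_plus \<Theta> x y = lim_plus \<Theta> y x" by (rule lim_plus_comm)
next
  fix x y :: complex show "x * y = y * x" by simp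
next
  fix x y z :: complex show "x * y * z = x * (y * z)" by simp
next
  fix x y z show "x * lim_plus \<Theta> y z = lim_plus \<Theta> (x * y) (x * z)" by (rule lim_plus_distrib[OF c])
next
  show "\<exists>z\<in>F. \<exists>u\<in>F. z \<noteq> u \<and> (\<forall>x\<in>F. lim_plus \<Theta> x z = x) \<and> (\<forall>x\<in>F. x * u = x) \<and>
      (\<forall>x\<in>F. \<exists>y\<in>F. lim_plus \<Theta> x y = z) \<and> (\<forall>x\<in>F. x \<noteq> z \<longrightarrow> (\<exists>y\<in>F. x * y = u))"
  proof (rule bexI[of _ 0], rule bexI[of _ 1], intro conjI ballI impI)
    fix x assume x: "x \<in> F"
    show "lim_plus \<Theta> x 0 = x" by (rule lim_plus_zero[OF c])
    show "x * 1 = x" by simp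
    show "\<exists>y\<in>F. lim_plus \<Theta> x y = 0"
      by (rule bexI[of _ "- x"]) (use x F lim_plus_neg in auto)
    assume "x \<noteq> 0"
    then show "\<exists>y\<in>F. x * y = 1"
      by (intro bexI[of _ "inverse x"]) (use x F in auto)
  qed (use F in auto)
qed

theorem mainTheorem5:
  fixes F :: "complex set" and \<Theta> :: real
  shows
  "(((F = UNIV \<and> cos \<Theta> > 0) \<or> (F = \<real> \<and> \<Theta> = 0)) \<longrightarrow>
      nonassoc_field F (lim_plus \<Theta>) (*) \<and>
      (\<forall>(a :: nat \<Rightarrow> complex) n. (\<forall>k\<in>{1..n}. a k \<in> F) \<longrightarrow>
         (good_idx a n \<noteq> {} \<longrightarrow>
            (\<forall>M\<in>{1..n}. cmod (a M) = Max ((\<lambda>k. cmod (a k)) ` good_idx a n) \<longrightarrow>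
               (eps_sum_fun \<Theta> a {1..n} \<longlongrightarrow> limit_value \<Theta> a n M) at_top)) \<and>
         (good_idx a n = {} \<longrightarrow> (eps_sum_fun \<Theta> a {1..n} \<longlongrightarrow> 0) at_top)))
   \<and>
   (((F = UNIV \<and> cos \<Theta> < 0) \<or> (F = \<real> \<and> \<Theta> = pi)) \<longrightarrow>
      nonassoc_field F (lim_plus \<Theta>) (*) \<and>
      (\<forall>(a :: nat \<Rightarrow> complex) n. (\<forall>k\<in>{1..n}. a k \<in> F) \<longrightarrow>
         (good_idx a n \<noteq> {} \<longrightarrow>
            (\<forall>m\<in>{1..n}. cmod (a m) = Min ((\<lambda>k. cmod (a k)) ` good_idx a n) \<longrightarrow>
               (eps_sum_fun \<Theta> a {1..n} \<longlongrightarrow> limit_value \<Theta> a n m) at_top)) \<and>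
         (good_idx a n = {} \<longrightarrow> (eps_sum_fun \<Theta> a {1..n} \<longlongrightarrow> 0) at_top)))"
proof (intro conjI impI allI ballI)
  assume h: "(F = UNIV \<and> cos \<Theta> > 0) \<or> (F = \<real> \<and> \<Theta> = 0)"
  then have c: "cos \<Theta> > 0" by auto
  show "nonassoc_field F (lim_plus \<Theta>) (*)"
    by (rule nonassoc) (use h in auto)
  fix a n M assume "good_idx a n \<noteq> {}" "M \<in> {1..n}" "cmod (a M) = Max ((\<lambda>k. cmod (a k)) ` good_idx a n)"
  then show "(eps_sum_fun \<Theta> a {1..n} \<longlongrightarrow> limit_value \<Theta> a n M) at_top"
    by (rule sum_lim_pos[OF c])
next
  fix a n assume "good_idx a n = {}"
  then show "(eps_sum_fun \<Theta> a {1..n} \<longlongrightarrow> 0) at_top" by (rule sum_lim_empty)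
next
  assume h: "(F = UNIV \<and> cos \<Theta> < 0) \<or> (F = \<real> \<and> \<Theta> = pi)"
  then have c: "cos \<Theta> < 0" by auto
  show "nonassoc_field F (lim_plus \<Theta>) (*)"
    by (rule nonassoc) (use h in auto)
  fix a n m assume "good_idx a n \<noteq> {}" "m \<in> {1..n}" "cmod (a m) = Min ((\<lambda>k. cmod (a k)) ` good_idx a n)"
  then show "(eps_sum_fun \<Theta> a {1..n} \<longlongrightarrow> limit_value \<Theta> a n m) at_top"
    by (rule sum_lim_neg[OF c])
next
  fix a n assume "good_idx a n = {}"
  then show "(eps_sum_fun \<Theta> a {1..n} \<longlongrightarrow> 0) at_top" by (rule sum_lim_empty)
qed

end
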